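(* For every round $\ell\ge\lceil n/2\rceil$ of Algorithm 2, $$\mathbb{E}\Big[v\big(\{e^{(\ell)}\}\ \big|\ \mathrm{ALG}^{\ge\ell+1}\big)\ \Big|\ L^{\le\ell},\,T^{\ge\ell+1}\Big]\ \ge\ \frac{1}{\ell}\Big(v(M^{(\ell)})-v(T^{\ge\ell+1})\Big),$$ where $\{e^{(\ell)}\}$ is read as $\emptyset$ if there is no tentative edge in round $\ell$.
   Context: Submodular secretary matching setting. Let $G=(L\cup R,E)$ be a bipartite graph with $|L|=n$, and $v\colon 2^E\to\mathbb{R}_{\ge0}$ monotone and submodular; for $S,S'\subseteq E$, $v(S\mid S')=v(S\cup S')-v(S')$. The vertices of $L$ arrive one per round in uniformly random order; on arrival of $u\in L$ its incident edges are revealed; $L^{\le\ell}$ denotes the set of vertices of $L$ arriving in rounds $1,\dots,\ell$. $\mathcal{A}$ is an offline algorithm that for every $L'\subseteq L$ returns a matching $\mathcal{A}(L'\cup R)$ of the subgraph induced by $L'\cup R$ with value at least $\alpha$ times the maximum value of $v$ over matchings of that subgraph ($\alpha\in(0,1]$), depending only on the set $L'$. Algorithm 2: it rejects the vertices arriving in rounds $1,\dots,\lceil n/2\rceil-1$; in each round $\ell\ge\lceil n/2\rceil$ with arriving vertex $u$, it computes $M^{(\ell)}=\mathcal{A}(L^{\le\ell}\cup R)$, lets $e^{(\ell)}$ be the edge incident to $u$ in $M^{(\ell)}$ (the tentative edge; none if $u$ is unmatched), and if $e^{(\ell)}$ exists and the set of accepted edges together with $e^{(\ell)}$ is a matching,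 accepts $e^{(\ell)}$. $T^{\ge\ell}$ is the set of tentative edges of rounds $\ell,\dots,n$, and $\mathrm{ALG}^{\ge\ell}$ is the set of edges accepted in rounds $\ell,\dots,n$. *)

theory Defs
  imports "HOL-Probability.Probability"
begin

definition is_matching :: "('l \<times> 'r) set \<Rightarrow> bool" where
  "is_matching M \<longleftrightarrow>
     (\<forall>e\<in>M. \<forall>e'\<in>M. e \<noteq> e' \<longrightarrow> fst e \<noteq> fst e' \<and> snd e \<noteq> snd e')"

definition matchings_of :: "('l \<times> 'r) set \<Rightarrow> 'l set \<Rightarrow> 'r set \<Rightarrow> ('l \<times> 'r) set set" where
  "matchings_of E L' R = {M. M \<subseteq> E \<inter> (L' \<times> R) \<and> is_matching M}"

definition marg :: "('e set \<Rightarrow> real) \<Rightarrow> 'e set \<Rightarrow> 'e set \<Rightarrow> real" where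
  "marg v X Y = v (X \<union> Y) - v Y"

text \<open>Arrival orders: lists enumerating L without repetition; round i (1-based)
  sees vertex pi ! (i - 1), and L^{<= l} = set (take l pi).\<close>
definition arrival_orders :: "'l set \<Rightarrow> 'l list set" where
  "arrival_orders L = {\<pi>. distinct \<pi> \<and> set \<pi> = L}"

text \<open>The set consisting of the tentative edge of round l (empty if there is none):
  the edge of M^(l) = A(L^{<= l}) incident to the vertex arriving in round l.\<close>
definition tent :: "('l set \<Rightarrow> ('l \<times> 'r) set) \<Rightarrow> 'l list \<Rightarrow> nat \<Rightarrow> ('l \<times> 'r) set" where
  "tent A \<pi> l = {e \<in> A (set (take l \<pi>)). fst e = \<pi> ! (l - 1)}"

definition Tge :: "('l set \<Rightarrow> ('l \<times> 'r) set) \<Rightarrow> 'l list \<Rightarrow> nat \<Rightarrow> ('l \<times> 'r) set" where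
  "Tge A \<pi> l = (\<Union>i\<in>{l..length \<pi>}. tent A \<pi> i)"

text \<open>Edges accepted by Algorithm 2 in rounds 1..i (rounds before ceil(n/2) reject).\<close>
fun acc :: "('l set \<Rightarrow> ('l \<times> 'r) set) \<Rightarrow> 'l list \<Rightarrow> nat \<Rightarrow> ('l \<times> 'r) set" where
  "acc A \<pi> 0 = {}"
| "acc A \<pi> (Suc i) =
     (if Suc i < (length \<pi> + 1) div 2 then acc A \<pi> i
      else if tent A \<pi> (Suc i) \<noteq> {} \<and> is_matching (acc A \<pi> i \<union> tent A \<pi> (Suc i))
           then acc A \<pi> i \<union> tent A \<pi> (Suc i)
           else acc A \<pi> i)"

definition ALGge :: "('l set \<Rightarrow> ('l \<times> 'r) set) \<Rightarrow> 'l list \<Rightarrow> nat \<Rightarrow> ('l \<times> 'r) set" where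
  "ALGge A \<pi> l = acc A \<pi> (length \<pi>) - acc A \<pi> (l - 1)"

end

theory Submission imports Defs begin

lemma cond_pmf_of_set:
  assumes "finite X" "X \<inter> S \<noteq> {}"
  shows "cond_pmf (pmf_of_set X) S = pmf_of_set (X \<inter> S)"
proof (rule pmf_eqI)
  fix x
  have ne: "X \<noteq> {}" using assms by auto
  have ne2: "X \<inter> S \<noteq> {}" using assms by auto
  have f2: "finite (X \<inter> S)" using assms by auto
  have c1: "card X > 0" using ne assms card_gt_0_iff by blast
  have c2: "card (X \<inter> S) > 0" using ne2 f2 card_gt_0_iff by blast
  have "set_pmf (pmf_of_set X) \<inter> S \<noteq> {}" using assms ne by simp
  then have eq: "pmf (cond_pmf (pmf_of_set X) S) x = (if x \<in> S then pmf (pmf_of_set X) x / measure (pmf_of_set X) S else 0)"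
    by (rule pmf_cond)
  show "pmf (cond_pmf (pmf_of_set X) S) x = pmf (pmf_of_set (X \<inter> S)) x"
    unfolding eq using c1 c2 by (simp add: measure_pmf_of_set[OF ne assms(1)] pmf_of_set[OF ne assms(1)]
       pmf_of_set[OF ne2 f2] indicator_def)
qed


definition sw :: "'a \<Rightarrow> 'a \<Rightarrow> 'a \<Rightarrow> 'a" where
  "sw u w x = (if x = u then w else if x = w then u else x)"

lemma sw_inv[simp]: "sw u w (sw u w x) = x" by (auto simp: sw_def)
lemma sw_comm: "sw w u = sw u w" by (auto simp: sw_def fun_eq_iff)
lemma sw_inj: "inj (sw u w)" by (metis injI sw_inv)
lemma sw_image: "u \<in> X \<Longrightarrow> w \<in> X \<Longrightarrow> sw u w ` X = X"
  by (auto simp: sw_def image_iff)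

lemma distinct_take_drop_nth:
  assumes "distinct xs" "l \<le> i" "i < length xs"
  shows "xs ! i \<notin> set (take l xs)"
proof
  assume "xs ! i \<in> set (take l xs)"
  then obtain j where j: "j < length (take l xs)" "take l xs ! j = xs ! i" by (auto simp: in_set_conv_nth)
  then have "j < l" "xs ! j = xs ! i" by auto
  moreover have "j < length xs" using j by auto
  ultimately show False using assms nth_eq_iff_index_eq by fastforce
qed

lemma swap_props:
  fixes \<pi> :: "'l list"
  assumes d: "distinct \<pi>" and u: "u \<in> set (take l \<pi>)" and w: "w \<in> set (take l \<pi>)"
    and l1: "1 \<le> l" and l2: "l \<le> length \<pi>" and idx: "\<pi> ! (l - 1) = u"
  shows "distinct (map (sw u w) \<pi>)" "set (map (sw u w) \<pi>) = set \<pi>"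
    "set (take l (map (sw u w) \<pi>)) = set (take l \<pi>)"
    "Tge A (map (sw u w) \<pi>) (l + 1) = Tge A \<pi> (l + 1)"
    "map (sw u w) \<pi> ! (l - 1) = w"
proof -
  show "distinct (map (sw u w) \<pi>)" using d inj_on_subset[OF sw_inj subset_UNIV] by (simp add: distinct_map)
  have uw: "u \<in> set \<pi>" "w \<in> set \<pi>" using u w by (auto dest: in_set_takeD)
  show "set (map (sw u w) \<pi>) = set \<pi>" using sw_image[OF uw] by simp
  show "set (take l (map (sw u w) \<pi>)) = set (take l \<pi>)" using sw_image[OF u w] by (simp add: take_map)
  show "map (sw u w) \<pi> ! (l - 1) = w" using idx l1 l2 by (simp add: sw_def)
  have tk: "set (take i (map (sw u w) \<pi>)) = set (take i \<pi>)" if "l \<le> i" for i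
  proof -
    have "set (take l \<pi>) \<subseteq> set (take i \<pi>)" using that by (rule set_take_subset_set_take)
    then have "sw u w ` set (take i \<pi>) = set (take i \<pi>)" using u w by (intro sw_image) auto
    then show ?thesis by (simp add: take_map)
  qed
  have nt: "map (sw u w) \<pi> ! (i - 1) = \<pi> ! (i - 1)" if "i \<in> {l+1..length \<pi>}" for i
  proof -
    have "\<pi> ! (i - 1) \<notin> set (take l \<pi>)" using that d by (intro distinct_take_drop_nth) auto
    then have "\<pi> ! (i - 1) \<noteq> u" "\<pi> ! (i - 1) \<noteq> w" using u w by auto
    moreover have "i - 1 < length \<pi>" using that by auto
    ultimately show ?thesis by (simp add: sw_def)
  qed
  show "Tge A (map (sw u w) \<pi>) (l + 1) = Tge A \<pi> (l + 1)"
    unfolding Tge_def tent_def using tk nt by (intro SUP_cong) auto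
qed

lemma acc_sub: "i \<le> j \<Longrightarrow> acc A \<pi> j - acc A \<pi> i \<subseteq> (\<Union>k\<in>{Suc i..j}. tent A \<pi> k)"
proof (induction j)
  case 0 then show ?case by simp
next
  case (Suc j)
  show ?case
  proof (cases "i = Suc j")
    case True then show ?thesis by simp
  next
    case False
    then have "i \<le> j" using Suc by simp
    moreover have "{Suc i..j} \<subseteq> {Suc i..Suc j}" by auto
    ultimately have "acc A \<pi> j - acc A \<pi> i \<subseteq> (\<Union>k\<in>{Suc i..Suc j}. tent A \<pi> k)" using Suc.IH by blast
    moreover have "acc A \<pi> (Suc j) \<subseteq> acc A \<pi> j \<union> tent A \<pi> (Suc j)" by auto
    moreover have "Suc j \<in> {Suc i..Suc j}" using \<open>i \<le> j\<close> by auto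
    then have "tent A \<pi> (Suc j) \<subseteq> (\<Union>k\<in>{Suc i..Suc j}. tent A \<pi> k)" by blast
    ultimately show ?thesis by blast
  qed
qed

lemma marg_anti:
  assumes v_mono: "\<And>X Y. X \<subseteq> Y \<Longrightarrow> Y \<subseteq> E \<Longrightarrow> v X \<le> v Y"
    and v_submod: "\<And>X Y. X \<subseteq> E \<Longrightarrow> Y \<subseteq> E \<Longrightarrow> v (X \<union> Y) + v (X \<inter> Y) \<le> v X + v Y"
    and "X \<subseteq> Y" "Y \<subseteq> E" "S \<subseteq> E"
  shows "marg v S Y \<le> marg v S X"
proof -
  have e: "(S \<union> X) \<union> Y = S \<union> Y" using assms by auto
  have "v ((S \<union> X) \<union> Y) + v ((S \<union> X) \<inter> Y) \<le> v (S \<union> X) + v Y" using assms by (intro v_submod) auto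
  then have "v (S \<union> Y) + v ((S \<union> X) \<inter> Y) \<le> v (S \<union> X) + v Y" by (simp only: e)
  moreover have "v X \<le> v ((S \<union> X) \<inter> Y)" using assms by (intro v_mono) auto
  ultimately show ?thesis unfolding marg_def by linarith
qed

lemma marg_sum:
  assumes v_mono: "\<And>X Y. X \<subseteq> Y \<Longrightarrow> Y \<subseteq> E \<Longrightarrow> v X \<le> v Y"
    and v_submod: "\<And>X Y. X \<subseteq> E \<Longrightarrow> Y \<subseteq> E \<Longrightarrow> v (X \<union> Y) + v (X \<inter> Y) \<le> v X + v Y"
    and F: "\<And>u. F u \<subseteq> E" and T: "T \<subseteq> E"
    and fin: "finite U"
  shows "marg v (\<Union>u\<in>U. F u) T \<le> (\<Sum>u\<in>U. marg v (F u) T)"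
  using fin
proof (induction U rule: finite_induct)
  case empty then show ?case by (simp add: marg_def)
next
  case (insert x U)
  let ?B = "\<Union>u\<in>U. F u"
  have "marg v (F x) (?B \<union> T) \<le> marg v (F x) T"
    using F T by (intro marg_anti[OF v_mono v_submod]) auto
  moreover have "marg v (\<Union>u\<in>insert x U. F u) T = marg v (F x) (?B \<union> T) + marg v ?B T"
    unfolding marg_def by (simp add: Un_assoc)
  ultimately show ?case using insert by simp
qed

theorem mainTheorem11:
  fixes L :: "'l set" and R :: "'r set" and E :: "('l \<times> 'r) set"
    and v :: "('l \<times> 'r) set \<Rightarrow> real"
    and A :: "'l set \<Rightarrow> ('l \<times> 'r) set"
    and n l :: nat and \<alpha> :: real and \<pi>0 :: "'l list"
  assumes finL: "finite L" and finR: "finite R" and cardL: "card L = n"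
    and E_sub: "E \<subseteq> L \<times> R"
    and v_nonneg: "\<And>X. X \<subseteq> E \<Longrightarrow> v X \<ge> 0"
    and v_mono: "\<And>X Y. X \<subseteq> Y \<Longrightarrow> Y \<subseteq> E \<Longrightarrow> v X \<le> v Y"
    and v_submod: "\<And>X Y. X \<subseteq> E \<Longrightarrow> Y \<subseteq> E \<Longrightarrow> v (X \<union> Y) + v (X \<inter> Y) \<le> v X + v Y"
    and alpha: "0 < \<alpha>" "\<alpha> \<le> 1"
    and A_match: "\<And>L'. L' \<subseteq> L \<Longrightarrow> A L' \<in> matchings_of E L' R"
    and A_approx: "\<And>L' M. L' \<subseteq> L \<Longrightarrow> M \<in> matchings_of E L' R \<Longrightarrow> \<alpha> * v M \<le> v (A L')"
    and l_lo: "(n + 1) div 2 \<le> l" and l_pos: "1 \<le> l" and l_hi: "l \<le> n"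
    and pi0: "\<pi>0 \<in> arrival_orders L"
  shows
    "measure_pmf.expectation
       (cond_pmf (pmf_of_set (arrival_orders L))
          {\<pi> \<in> arrival_orders L. set (take l \<pi>) = set (take l \<pi>0)
                                 \<and> Tge A \<pi> (l + 1) = Tge A \<pi>0 (l + 1)})
       (\<lambda>\<pi>. marg v (tent A \<pi> l) (ALGge A \<pi> (l + 1)))
     \<ge> (1 / real l) * (v (A (set (take l \<pi>0))) - v (Tge A \<pi>0 (l + 1)))"
proof -
  define P where "P = set (take l \<pi>0)"
  define T0 where "T0 = Tge A \<pi>0 (l + 1)"
  define S where "S = {\<pi> \<in> arrival_orders L. set (take l \<pi>) = P \<and> Tge A \<pi> (l + 1) = T0}"
  define M where "M = A P"
  define h where "h u = marg v {e \<in> M. fst e = u} T0" for u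
  define idx where "idx \<pi> = (\<pi>::'l list) ! (l - 1)" for \<pi>
  define f where "f \<pi> = marg v (tent A \<pi> l) (ALGge A \<pi> (l + 1))" for \<pi>
  have AE: "A L' \<subseteq> E" if "L' \<subseteq> L" for L' using A_match[OF that] by (auto simp: matchings_of_def)
  have AP: "A L' \<subseteq> L' \<times> R" if "L' \<subseteq> L" for L' using A_match[OF that] by (auto simp: matchings_of_def)
  have ord: "distinct \<pi> \<and> set \<pi> = L \<and> length \<pi> = n" if "\<pi> \<in> arrival_orders L" for \<pi>
    using that cardL distinct_card by (fastforce simp: arrival_orders_def)
  have finO: "finite (arrival_orders L)"
    by (rule finite_subset[OF _ finite_subset_distinct[OF finL]]) (auto simp: arrival_orders_def)
  have finS: "finite S" using finO unfolding S_def by auto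
  have pi0S: "\<pi>0 \<in> S" using pi0 unfolding S_def P_def T0_def by auto
  have Ssub: "S \<subseteq> arrival_orders L" unfolding S_def by auto
  have P_L: "P \<subseteq> L" using ord[OF pi0] unfolding P_def by (auto dest: in_set_takeD)
  have cardP: "card P = l" using ord[OF pi0] l_hi unfolding P_def by (simp add: distinct_card)
  have ME: "M \<subseteq> E" unfolding M_def using AE[OF P_L] .
  have TgeE: "Tge A \<pi> k \<subseteq> E" if "set \<pi> = L" for \<pi> k
  proof -
    have "tent A \<pi> i \<subseteq> E" for i
    proof -
      have "set (take i \<pi>) \<subseteq> L" using that set_take_subset by metis
      then have "A (set (take i \<pi>)) \<subseteq> E" by (rule AE)
      then show ?thesis unfolding tent_def by blast
    qed
    then show ?thesis unfolding Tge_def by blast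
  qed
  have T0E: "T0 \<subseteq> E" unfolding T0_def using TgeE ord[OF pi0] by blast
  have cond: "cond_pmf (pmf_of_set (arrival_orders L))
          {\<pi> \<in> arrival_orders L. set (take l \<pi>) = set (take l \<pi>0)
                                 \<and> Tge A \<pi> (l + 1) = Tge A \<pi>0 (l + 1)} = pmf_of_set S"
  proof -
    have e: "{\<pi> \<in> arrival_orders L. set (take l \<pi>) = set (take l \<pi>0)
                                 \<and> Tge A \<pi> (l + 1) = Tge A \<pi>0 (l + 1)} = S"
      unfolding S_def P_def T0_def ..
    have "arrival_orders L \<inter> S = S" using Ssub by auto
    then show ?thesis unfolding e using cond_pmf_of_set[OF finO, of S] pi0S by auto
  qed
  have Sne: "S \<noteq> {}" using pi0S by auto
  have cardS_pos: "card S > 0" using finS Sne card_gt_0_iff by blast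
  have expeq: "measure_pmf.expectation (pmf_of_set S) f = (\<Sum>\<pi>\<in>S. f \<pi>) / card S"
    by (rule integral_pmf_of_set[OF Sne finS])
  have fh: "h (idx \<pi>) \<le> f \<pi>" if "\<pi> \<in> S" for \<pi>
  proof -
    have o: "distinct \<pi>" "set \<pi> = L" "length \<pi> = n" using ord that Ssub by auto
    have st: "set (take l \<pi>) = P" and tg: "Tge A \<pi> (l + 1) = T0" using that unfolding S_def by auto
    have te: "tent A \<pi> l = {e \<in> M. fst e = idx \<pi>}" unfolding tent_def M_def idx_def st ..
    have "ALGge A \<pi> (l + 1) \<subseteq> Tge A \<pi> (l + 1)"
      unfolding ALGge_def Tge_def using acc_sub[of l "length \<pi>" A \<pi>] o l_hi by simp
    then have sub: "ALGge A \<pi> (l + 1) \<subseteq> T0" using tg by simp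
    show ?thesis unfolding f_def h_def te
      by (rule marg_anti[OF v_mono v_submod sub T0E]) (use ME in auto)
  qed
  have idxP: "idx \<pi> \<in> P" if "\<pi> \<in> S" for \<pi>
  proof -
    have o: "length \<pi> = n" using ord that Ssub by auto
    have st: "set (take l \<pi>) = P" using that unfolding S_def by auto
    have "take l \<pi> ! (l - 1) = \<pi> ! (l - 1)" using l_pos by simp
    moreover have "l - 1 < length (take l \<pi>)" using o l_pos l_hi by simp
    ultimately show ?thesis unfolding idx_def st[symmetric] by (metis nth_mem)
  qed
  define cnt where "cnt u = card {\<pi> \<in> S. idx \<pi> = u}" for u
  have swap_S: "map (sw u w) \<pi> \<in> S \<and> idx (map (sw u w) \<pi>) = w"
    if "\<pi> \<in> S" "idx \<pi> = u" "w \<in> P" for \<pi> u w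
  proof -
    have o: "distinct \<pi>" "set \<pi> = L" "length \<pi> = n" using ord that Ssub by auto
    have st: "set (take l \<pi>) = P" and tg: "Tge A \<pi> (l + 1) = T0" using that unfolding S_def by auto
    have uP: "u \<in> set (take l \<pi>)" using idxP[OF that(1)] that st by auto
    have wP: "w \<in> set (take l \<pi>)" using that st by auto
    note sp = swap_props[OF o(1) uP wP l_pos]
    have "l \<le> length \<pi>" using o l_hi by simp
    note sp = sp[OF this that(2)[unfolded idx_def]]
    show ?thesis using sp o st tg unfolding S_def idx_def arrival_orders_def by auto
  qed
  have cnt_eq: "cnt u = cnt w" if "u \<in> P" "w \<in> P" for u w
  proof -
    have "bij_betw (map (sw u w)) {\<pi> \<in> S. idx \<pi> = u} {\<pi> \<in> S. idx \<pi> = w}"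
    proof (rule bij_betw_byWitness[where f' = "map (sw u w)"])
      show "\<forall>a\<in>{\<pi> \<in> S. idx \<pi> = u}. map (sw u w) (map (sw u w) a) = a" by (simp add: map_idI)
      show "\<forall>a\<in>{\<pi> \<in> S. idx \<pi> = w}. map (sw u w) (map (sw u w) a) = a" by (simp add: map_idI)
      show "map (sw u w) ` {\<pi> \<in> S. idx \<pi> = u} \<subseteq> {\<pi> \<in> S. idx \<pi> = w}"
        using swap_S that by blast
      show "map (sw u w) ` {\<pi> \<in> S. idx \<pi> = w} \<subseteq> {\<pi> \<in> S. idx \<pi> = u}"
        using swap_S[of _ w u] that by (auto simp: sw_comm)
    qed
    then show ?thesis unfolding cnt_def by (rule bij_betw_same_card)
  qed
  define c where "c = cnt (idx \<pi>0)"
  have cnt_c: "cnt u = c" if "u \<in> P" for u unfolding c_def using cnt_eq[OF that idxP[OF pi0S]] .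
  have finP: "finite P" unfolding P_def by simp
  have grp: "(\<Sum>\<pi>\<in>S. g (idx \<pi>)) = (\<Sum>u\<in>P. real (cnt u) * g u)" for g :: "'l \<Rightarrow> real"
  proof -
    have "(\<Sum>\<pi>\<in>S. g (idx \<pi>)) = (\<Sum>u\<in>P. \<Sum>\<pi>\<in>{x \<in> S. idx x = u}. g (idx \<pi>))"
      using sum.group[OF finS finP, of idx "\<lambda>\<pi>. g (idx \<pi>)"] idxP by (metis image_subsetI)
    also have "\<dots> = (\<Sum>u\<in>P. real (cnt u) * g u)" unfolding cnt_def by (intro sum.cong) auto
    finally show ?thesis .
  qed
  have sumh: "(\<Sum>\<pi>\<in>S. h (idx \<pi>)) = real c * (\<Sum>u\<in>P. h u)"
    using grp[of h] cnt_c by (simp add: sum_distrib_left)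
  have cardS: "real (card S) = real l * real c"
    using grp[of "\<lambda>_. 1"] cnt_c cardP by simp
  have cpos: "c > 0"
  proof (rule ccontr)
    assume "\<not> c > 0"
    then have "c = 0" by simp
    then have "real (card S) = 0" using cardS by simp
    then show False using cardS_pos by simp
  qed
  have MU: "(\<Union>u\<in>P. {e \<in> M. fst e = u}) = M" using AP[OF P_L] unfolding M_def by auto
  have "marg v M T0 \<le> (\<Sum>u\<in>P. h u)"
    using marg_sum[OF v_mono v_submod _ T0E finP, of "\<lambda>u. {e \<in> M. fst e = u}"] ME MU
    unfolding h_def by auto
  moreover have "v M \<le> v (M \<union> T0)" using ME T0E by (intro v_mono) auto
  ultimately have hsum: "v M - v T0 \<le> (\<Sum>u\<in>P. h u)" unfolding marg_def by linarith
  have "(\<Sum>\<pi>\<in>S. h (idx \<pi>)) \<le> (\<Sum>\<pi>\<in>S. f \<pi>)" using fh by (rule sum_mono)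
  then have "real c * (\<Sum>u\<in>P. h u) / card S \<le> (\<Sum>\<pi>\<in>S. f \<pi>) / card S"
    using cardS_pos sumh by (simp add: divide_right_mono)
  moreover have "real c * (\<Sum>u\<in>P. h u) / card S = (\<Sum>u\<in>P. h u) / real l"
    using cardS cpos l_pos by simp
  ultimately have "(\<Sum>u\<in>P. h u) / real l \<le> measure_pmf.expectation (pmf_of_set S) f"
    using expeq by simp
  moreover have "(1 / real l) * (v M - v T0) \<le> (\<Sum>u\<in>P. h u) / real l"
    using hsum l_pos by (simp add: divide_right_mono)
  ultimately show ?thesis unfolding cond f_def[symmetric] M_def P_def T0_def by linarith
qed

end
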